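(* Let $G$ be a connected undirected graph. Suppose that for every initial vector $v(0)$ with $\|v(0)\|_1\le1$ and every $t\ge1$ there is a non-negative real random variable $F(t,v(0))$, a function of the random edge sequence of length $t$, such that: (i) there exists $C>0$ such that for every $v(0)$ with $\|v(0)\|_1\le1$, every $t\ge1$ and every $w\in\mathbb R^{V(G)}$, $\mathbb E[F(t,v(0))\mid v(t-1)=w]\ge C\|w-\bar v\|_1$; and (ii) $\sum_{t=1}^k F(t,v(0))$ converges in $L^1$ (over random infinite edge sequences), as $k\to\infty$, to a random variable $F(v(0))$. Let $\mathbb E_{\max}=\max_{\|v(0)\|_1\le1}\mathbb E[F(v(0))]$. Then for every $\epsilon>0$, $$t_{\epsilon,1}(G,v(0))\le\frac{8\,\mathbb E[F(v(0))]}{\epsilon^2C}\qquad\text{and}\qquad t_{\epsilon,1}(G)\le\frac{8\,\mathbb E_{\max}}{\epsilon^2C},$$ where $t_{\epsilon,1}(G,v(0))=\min\{t\in\mathbb N:\mathbb E\|v(t)-\bar v\|_1\le\epsilon\}$.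
   Context: The averaging process on a finite, undirected, connected graph $G=(V,E)$, $V=\{1,\dots,n\}$: the state vector $v(t)\in\mathbb R^n$, $t=0,1,2,\dots$, starts from a given $v(0)$; at each step $t\ge 1$ an edge $\{i,j\}\in E$ is chosen uniformly at random (independently of all previous choices) and both $v_i$ and $v_j$ are replaced by $(v_i+v_j)/2$, all other coordinates unchanged. $\bar v=(a,\dots,a)^T$ with $a=\frac1n\sum_i v_i(0)$. $t_{\epsilon,1}(G)$ is the least $t\in\mathbb N$ such that for every $v(0)$ with $\|v(0)\|_1=1$ one has $\mathbb E\|v(t)-\bar v\|_1\le\epsilon$. *)

theory Defs
  imports "HOL-Probability.Probability"
begin

text \<open>Vertices: a finite type 'a (V = UNIV). Edges: a set E of two-element subsets of V.\<close>

definition simple_graph :: "'a set set \<Rightarrow> bool" where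
  "simple_graph E \<longleftrightarrow> (\<forall>e\<in>E. \<exists>x y. x \<noteq> y \<and> e = {x, y})"

definition connected_graph :: "'a set set \<Rightarrow> bool" where
  "connected_graph E \<longleftrightarrow> (\<forall>x y. (x, y) \<in> {(u, v). {u, v} \<in> E}\<^sup>*)"

definition avg_step :: "'a set \<Rightarrow> ('a \<Rightarrow> real) \<Rightarrow> ('a \<Rightarrow> real)" where
  "avg_step e v = (\<lambda>k. if k \<in> e then (\<Sum>x\<in>e. v x) / 2 else v k)"

definition avg_proc :: "('a \<Rightarrow> real) \<Rightarrow> 'a set list \<Rightarrow> ('a \<Rightarrow> real)" where
  "avg_proc v0 es = foldl (\<lambda>v e. avg_step e v) v0 es"

definition l1norm :: "('a::finite \<Rightarrow> real) \<Rightarrow> real" where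
  "l1norm v = (\<Sum>x\<in>UNIV. \<bar>v x\<bar>)"

definition vbar :: "('a::finite \<Rightarrow> real) \<Rightarrow> ('a \<Rightarrow> real)" where
  "vbar v0 = (\<lambda>_. (\<Sum>x\<in>UNIV. v0 x) / real CARD('a))"

text \<open>Edge sequences of length t; the uniform distribution on them is t i.i.d. uniform edges.\<close>
definition edge_seqs :: "'a set set \<Rightarrow> nat \<Rightarrow> 'a set list set" where
  "edge_seqs E t = {es. set es \<subseteq> E \<and> length es = t}"

definition seq_pmf :: "'a set set \<Rightarrow> nat \<Rightarrow> 'a set list pmf" where
  "seq_pmf E t = pmf_of_set (edge_seqs E t)"

definition exp_err :: "'a::finite set set \<Rightarrow> ('a \<Rightarrow> real) \<Rightarrow> nat \<Rightarrow> real" where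
  "exp_err E v0 t = measure_pmf.expectation (seq_pmf E t)
      (\<lambda>es. l1norm (\<lambda>x. avg_proc v0 es x - vbar v0 x))"

definition t_eps_v0 :: "'a::finite set set \<Rightarrow> real \<Rightarrow> ('a \<Rightarrow> real) \<Rightarrow> nat" where
  "t_eps_v0 E \<epsilon> v0 = (LEAST t. exp_err E v0 t \<le> \<epsilon>)"

definition t_eps :: "'a::finite set set \<Rightarrow> real \<Rightarrow> nat" where
  "t_eps E \<epsilon> = (LEAST t. \<forall>v0. l1norm v0 = 1 \<longrightarrow> exp_err E v0 t \<le> \<epsilon>)"

definition edge_stream_space :: "'a set set \<Rightarrow> 'a set stream measure" where
  "edge_stream_space E = stream_space (measure_pmf (pmf_of_set E))"

end

theory Submission imports Defs begin

lemma S_finite: "finite (edge_seqs (E::'a::finite set set) t)"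
  unfolding edge_seqs_def by (rule finite_lists_length_eq) simp

lemma S_ne: "E \<noteq> {} \<Longrightarrow> edge_seqs E t \<noteq> {}"
proof -
  assume "E \<noteq> {}" then obtain e where "e \<in> E" by blast
  then have "replicate t e \<in> edge_seqs E t" unfolding edge_seqs_def by auto
  then show ?thesis by blast
qed

lemma S_card: "card (edge_seqs (E::'a::finite set set) t) = card E ^ t"
  unfolding edge_seqs_def by (rule card_lists_length_eq) simp

lemma S_Suc_cons: "edge_seqs E (Suc n) = (\<lambda>(x,xs). x#xs) ` (E \<times> edge_seqs E n)"
  unfolding edge_seqs_def by (auto simp: length_Suc_conv)

lemma S_Suc_snoc: "edge_seqs E (Suc n) = (\<lambda>(xs,e). xs@[e]) ` (edge_seqs E n \<times> E)"
proof
  show "(\<lambda>(xs,e). xs@[e]) ` (edge_seqs E n \<times> E) \<subseteq> edge_seqs E (Suc n)"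
    unfolding edge_seqs_def by auto
  show "edge_seqs E (Suc n) \<subseteq> (\<lambda>(xs,e). xs@[e]) ` (edge_seqs E n \<times> E)"
  proof
    fix es assume es: "es \<in> edge_seqs E (Suc n)"
    then have "es \<noteq> []" unfolding edge_seqs_def by auto
    then have "es = butlast es @ [last es]" by simp
    moreover have "(butlast es, last es) \<in> edge_seqs E n \<times> E"
      using es \<open>es \<noteq> []\<close> unfolding edge_seqs_def
      by (auto dest: in_set_butlastD)
    ultimately show "es \<in> (\<lambda>(xs,e). xs@[e]) ` (edge_seqs E n \<times> E)"
      by (metis (no_types, lifting) case_prod_conv image_eqI)
  qed
qed

lemma pair_pmf_of_set:
  assumes "finite A" "A \<noteq> {}" "finite B" "B \<noteq> {}"
  shows "pair_pmf (pmf_of_set A) (pmf_of_set B) = pmf_of_set (A \<times> B)"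
proof (rule pmf_eqI)
  fix ab :: "'a \<times> 'b"
  obtain a b where ab: "ab = (a,b)" by (cases ab)
  show "pmf (pair_pmf (pmf_of_set A) (pmf_of_set B)) ab = pmf (pmf_of_set (A \<times> B)) ab"
    unfolding ab using assms by (simp add: pmf_pair card_cartesian_product indicator_def)
qed

lemma seq_Suc: "E \<noteq> {} \<Longrightarrow> seq_pmf (E::'a::finite set set) (Suc n) =
   map_pmf (\<lambda>(x,xs). x#xs) (pair_pmf (pmf_of_set E) (seq_pmf E n))"
proof -
  assume ne: "E \<noteq> {}"
  have "map_pmf (\<lambda>(x,xs). x#xs) (pair_pmf (pmf_of_set E) (seq_pmf E n))
     = map_pmf (\<lambda>(x,xs). x#xs) (pmf_of_set (E \<times> edge_seqs E n))"
    unfolding seq_pmf_def using ne by (subst pair_pmf_of_set) (auto simp: S_finite S_ne)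
  also have "\<dots> = pmf_of_set ((\<lambda>(x,xs). x#xs) ` (E \<times> edge_seqs E n))"
    using ne by (intro map_pmf_of_set_inj) (auto simp: S_finite S_ne inj_on_def)
  finally show ?thesis unfolding seq_pmf_def S_Suc_cons by simp
qed

lemma integral_seq: "E \<noteq> {} \<Longrightarrow> measure_pmf.expectation (seq_pmf (E::'a::finite set set) t) g
   = (\<Sum>es\<in>edge_seqs E t. g es) / real (card E ^ t)"
  unfolding seq_pmf_def by (simp add: integral_pmf_of_set[OF S_ne S_finite] S_card)


lemma stake_meas: "stake t \<in> measurable (stream_space (measure_pmf (p :: 'b::countable pmf))) (count_space UNIV)"
proof -
  have "sets (stream_space (measure_pmf p)) = sets (stream_space (count_space UNIV))"
    by (rule sets_stream_space_cong) simp
  then show ?thesis using measurable_stake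
    by (metis measurable_cong_sets)
qed

lemma fstake_meas: "(\<lambda>\<omega>. f (stake t \<omega>)) \<in> borel_measurable (stream_space (measure_pmf (p :: 'b::countable pmf)))"
  by (rule measurable_compose[OF stake_meas]) simp

lemma nn_stream:
  fixes E :: "'a::finite set set"
  assumes ne: "E \<noteq> {}"
  shows "(\<integral>\<^sup>+\<omega>. f (stake t \<omega>) \<partial>edge_stream_space E) = (\<integral>\<^sup>+xs. f xs \<partial>seq_pmf E t)"
proof (induction t arbitrary: f)
  case 0
  interpret S: prob_space "edge_stream_space E"
    unfolding edge_stream_space_def by (rule prob_space.prob_space_stream_space) (rule measure_pmf.prob_space_axioms)
  have "seq_pmf E 0 = return_pmf []"
  proof -
    have "edge_seqs E 0 = {[]}" unfolding edge_seqs_def by auto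
    then show ?thesis unfolding seq_pmf_def by (simp add: pmf_of_set_singleton)
  qed
  then show ?case by (simp add: S.emeasure_space_1)
next
  case (Suc n)
  have "(\<integral>\<^sup>+\<omega>. f (stake (Suc n) \<omega>) \<partial>edge_stream_space E)
     = (\<integral>\<^sup>+x. (\<integral>\<^sup>+X. f (stake (Suc n) (x ## X)) \<partial>edge_stream_space E) \<partial>pmf_of_set E)"
    unfolding edge_stream_space_def
    by (rule prob_space.nn_integral_stream_space[OF measure_pmf.prob_space_axioms]) (rule fstake_meas)
  also have "\<dots> = (\<integral>\<^sup>+x. (\<integral>\<^sup>+xs. f (x # xs) \<partial>seq_pmf E n) \<partial>pmf_of_set E)"
  proof (rule nn_integral_cong)
    fix x
    show "(\<integral>\<^sup>+X. f (stake (Suc n) (x ## X)) \<partial>edge_stream_space E) = (\<integral>\<^sup>+xs. f (x # xs) \<partial>seq_pmf E n)"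
      using Suc.IH[of "\<lambda>xs. f (x # xs)"] by simp
  qed
  also have "\<dots> = (\<integral>\<^sup>+xs. f xs \<partial>seq_pmf E (Suc n))"
    by (simp add: seq_Suc[OF ne] nn_integral_pair_pmf' case_prod_beta)
  finally show ?case .
qed

lemma distr_stream:
  fixes E :: "'a::finite set set"
  assumes ne: "E \<noteq> {}"
  shows "distr (edge_stream_space E) (count_space UNIV) (stake t) = measure_pmf (seq_pmf E t)"
proof (rule measure_eqI)
  show "sets (distr (edge_stream_space E) (count_space UNIV) (stake t)) = sets (measure_pmf (seq_pmf E t))"
    by simp
  fix A assume "A \<in> sets (distr (edge_stream_space E) (count_space UNIV) (stake t))"
  have "emeasure (distr (edge_stream_space E) (count_space UNIV) (stake t)) A
     = (\<integral>\<^sup>+\<omega>. indicator A (stake t \<omega>) \<partial>edge_stream_space E)"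
  proof -
    have m: "stake t \<in> measurable (edge_stream_space E) (count_space UNIV)"
      unfolding edge_stream_space_def by (rule stake_meas)
    have "emeasure (distr (edge_stream_space E) (count_space UNIV) (stake t)) A
      = emeasure (edge_stream_space E) (stake t -` A \<inter> space (edge_stream_space E))"
      by (rule emeasure_distr) (auto simp: m)
    also have "\<dots> = (\<integral>\<^sup>+\<omega>. indicator (stake t -` A \<inter> space (edge_stream_space E)) \<omega> \<partial>edge_stream_space E)"
      by (rule nn_integral_indicator[symmetric]) (rule measurable_sets[OF m], simp)
    also have "\<dots> = (\<integral>\<^sup>+\<omega>. indicator A (stake t \<omega>) \<partial>edge_stream_space E)"
      by (rule nn_integral_cong) (simp add: indicator_def)
    finally show ?thesis .
  qed
  also have "\<dots> = (\<integral>\<^sup>+xs. indicator A xs \<partial>seq_pmf E t)" by (rule nn_stream[OF ne])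
  also have "\<dots> = emeasure (measure_pmf (seq_pmf E t)) A" by simp
  finally show "emeasure (distr (edge_stream_space E) (count_space UNIV) (stake t)) A = emeasure (measure_pmf (seq_pmf E t)) A" .
qed

lemma int_stream:
  fixes E :: "'a::finite set set"
    and g :: "'a set list \<Rightarrow> real"
  assumes ne: "E \<noteq> {}"
  shows "integrable (edge_stream_space E) (\<lambda>\<omega>. g (stake t \<omega>))"
    "(\<integral>\<omega>. g (stake t \<omega>) \<partial>edge_stream_space E) = measure_pmf.expectation (seq_pmf E t) g"
proof -
  have m: "stake t \<in> measurable (edge_stream_space E) (count_space UNIV)"
    unfolding edge_stream_space_def by (rule stake_meas)
  have fin: "finite (set_pmf (seq_pmf E t))"
    unfolding seq_pmf_def using ne by (simp add: S_finite S_ne)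
  have i: "integrable (measure_pmf (seq_pmf E t)) g"
    by (rule integrable_measure_pmf_finite[OF fin])
  show "integrable (edge_stream_space E) (\<lambda>\<omega>. g (stake t \<omega>))"
    using i unfolding distr_stream[OF ne, of t, symmetric]
    by (subst (asm) integrable_distr_eq) (auto simp: m)
  show "(\<integral>\<omega>. g (stake t \<omega>) \<partial>edge_stream_space E) = measure_pmf.expectation (seq_pmf E t) g"
    unfolding distr_stream[OF ne, of t, symmetric]
    by (subst integral_distr) (auto simp: m)
qed


lemma avg_contract:
  assumes "simple_graph E" "e \<in> E"
  shows "l1norm (\<lambda>k. avg_step e v k - c) \<le> l1norm (\<lambda>k. v k - (c::real))"
proof -
  obtain x y where xy: "x \<noteq> y" "e = {x, y}" using assms unfolding simple_graph_def by blast
  have U: "(UNIV::'a set) = {x,y} \<union> (- {x,y})" by blast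
  have split: "\<And>f::'a \<Rightarrow> real. sum f UNIV = f x + f y + sum f (- {x,y})"
  proof -
    fix f :: "'a \<Rightarrow> real"
    have "sum f UNIV = sum f {x,y} + sum f (- {x,y})"
      by (subst U, rule sum.union_disjoint) auto
    then show "sum f UNIV = f x + f y + sum f (- {x,y})" using xy by simp
  qed
  have rest: "(\<Sum>k\<in>- {x,y}. \<bar>avg_step e v k - c\<bar>) = (\<Sum>k\<in>- {x,y}. \<bar>v k - c\<bar>)"
    by (rule sum.cong) (auto simp: avg_step_def xy)
  have ex: "avg_step e v x = (v x + v y) / 2" "avg_step e v y = (v x + v y) / 2"
    using xy by (auto simp: avg_step_def)
  have tri: "\<bar>(v x - c) + (v y - c)\<bar> \<le> \<bar>v x - c\<bar> + \<bar>v y - c\<bar>" by (rule abs_triangle_ineq)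
  have e1: "(v x + v y) / 2 - c = ((v x - c) + (v y - c)) / 2" by (simp add: field_simps)
  have e2: "\<bar>(v x + v y) / 2 - c\<bar> = \<bar>(v x - c) + (v y - c)\<bar> / 2" unfolding e1 by (simp add: abs_divide)
  have "\<bar>(v x + v y) / 2 - c\<bar> + \<bar>(v x + v y) / 2 - c\<bar> \<le> \<bar>v x - c\<bar> + \<bar>v y - c\<bar>"
    using tri unfolding e2 by simp
  then show ?thesis
    unfolding l1norm_def split[of "\<lambda>k. \<bar>avg_step e v k - c\<bar>"] split[of "\<lambda>k. \<bar>v k - c\<bar>"] rest ex
    by linarith
qed

lemma sum_snoc: "(\<Sum>es\<in>edge_seqs (E::'a::finite set set) (Suc n). h es) = (\<Sum>xs\<in>edge_seqs E n. \<Sum>e\<in>E. h (xs @ [e]))"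
proof -
  have inj: "inj_on (\<lambda>(xs,e). xs@[e]) (edge_seqs E n \<times> E)" by (auto simp: inj_on_def)
  have "(\<Sum>es\<in>edge_seqs E (Suc n). h es) = (\<Sum>p\<in>edge_seqs E n \<times> E. h ((\<lambda>(xs,e). xs@[e]) p))"
    unfolding S_Suc_snoc by (rule sum.reindex[OF inj, unfolded comp_def])
  also have "\<dots> = (\<Sum>xs\<in>edge_seqs E n. \<Sum>e\<in>E. h (xs @ [e]))"
    by (simp add: sum.cartesian_product split_def)
  finally show ?thesis .
qed

lemma avg_proc_snoc: "avg_proc v0 (xs @ [e]) = avg_step e (avg_proc v0 xs)"
  unfolding avg_proc_def by simp

lemma exp_err_mono:
  fixes E :: "'a::finite set set"
  assumes ne: "E \<noteq> {}" and simple: "simple_graph E"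
  shows "exp_err E v0 (Suc n) \<le> exp_err E v0 n"
proof -
  define c where "c = (\<Sum>x\<in>UNIV. v0 x) / real CARD('a)"
  have vb: "vbar v0 = (\<lambda>_. c)" unfolding vbar_def c_def by simp
  define h where "h = (\<lambda>v::'a\<Rightarrow>real. l1norm (\<lambda>x. v x - c))"
  have "(\<Sum>es\<in>edge_seqs E (Suc n). h (avg_proc v0 es))
      = (\<Sum>xs\<in>edge_seqs E n. \<Sum>e\<in>E. h (avg_step e (avg_proc v0 xs)))"
    by (simp add: sum_snoc avg_proc_snoc)
  also have "\<dots> \<le> (\<Sum>xs\<in>edge_seqs E n. \<Sum>e\<in>E. h (avg_proc v0 xs))"
    by (intro sum_mono) (auto simp: h_def intro: avg_contract[OF simple])
  also have "\<dots> = real (card E) * (\<Sum>xs\<in>edge_seqs E n. h (avg_proc v0 xs))"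
    by (simp add: sum_distrib_left)
  finally have le: "(\<Sum>es\<in>edge_seqs E (Suc n). h (avg_proc v0 es)) \<le> real (card E) * (\<Sum>xs\<in>edge_seqs E n. h (avg_proc v0 xs))" .
  have cE: "real (card E) > 0" using ne by (simp add: card_gt_0_iff)
  have "exp_err E v0 (Suc n) = (\<Sum>es\<in>edge_seqs E (Suc n). h (avg_proc v0 es)) / (real (card E) ^ Suc n)"
    unfolding exp_err_def integral_seq[OF ne] h_def vb by simp
  also have "\<dots> \<le> real (card E) * (\<Sum>xs\<in>edge_seqs E n. h (avg_proc v0 xs)) / (real (card E) ^ Suc n)"
    by (rule divide_right_mono[OF le]) (use cE in simp)
  also have "\<dots> = (\<Sum>xs\<in>edge_seqs E n. h (avg_proc v0 xs)) / (real (card E) ^ n)"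
    using cE ne by (simp add: field_simps)
  also have "\<dots> = exp_err E v0 n"
    unfolding exp_err_def integral_seq[OF ne] h_def vb by simp
  finally show ?thesis .
qed

lemma cond_pmf_of_set:
  assumes "finite S" "S \<inter> B \<noteq> {}"
  shows "cond_pmf (pmf_of_set S) B = pmf_of_set (S \<inter> B)"
proof (rule pmf_eqI)
  fix x
  have ne: "S \<noteq> {}" using assms by auto
  have sp: "set_pmf (pmf_of_set S) \<inter> B \<noteq> {}" using assms ne by simp
  have cS: "card S > 0" using assms ne by (simp add: card_gt_0_iff)
  have cSB: "card (S \<inter> B) > 0" using assms by (simp add: card_gt_0_iff)
  show "pmf (cond_pmf (pmf_of_set S) B) x = pmf (pmf_of_set (S \<inter> B)) x"
    unfolding pmf_cond[OF sp] using assms ne cS cSB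
    by (auto simp: measure_pmf_of_set indicator_def)
qed


lemma key:
  fixes E :: "'a::finite set set" and Fn :: "'a set list \<Rightarrow> real"
  assumes ne: "E \<noteq> {}"
    and cond: "\<And>w. {es \<in> edge_seqs E (Suc n). avg_proc v0 (butlast es) = w} \<noteq> {} \<Longrightarrow>
        measure_pmf.expectation (cond_pmf (seq_pmf E (Suc n)) {es. avg_proc v0 (butlast es) = w}) Fn
          \<ge> C * l1norm (\<lambda>x. w x - vbar v0 x)"
  shows "C * exp_err E v0 n \<le> measure_pmf.expectation (seq_pmf E (Suc n)) Fn"
proof -
  define S where "S = edge_seqs E (Suc n)"
  define wf where "wf = (\<lambda>es. avg_proc v0 (butlast es))"
  define g where "g = (\<lambda>y::'a\<Rightarrow>real. l1norm (\<lambda>x. y x - vbar v0 x))"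
  define A where "A = (\<lambda>y. {es. es \<in> S \<and> wf es = y})"
  have finS: "finite S" unfolding S_def by (rule S_finite)
  have finW: "finite (wf ` S)" using finS by simp
  have finA: "\<And>y. finite (A y)" unfolding A_def using finS by simp
  have each: "\<And>y. y \<in> wf ` S \<Longrightarrow> real (card (A y)) * (C * g y) \<le> sum Fn (A y)"
  proof -
    fix y assume y: "y \<in> wf ` S"
    have Ane: "A y \<noteq> {}" using y unfolding A_def by auto
    have SB: "S \<inter> {es. wf es = y} = A y" unfolding A_def by auto
    have c: "cond_pmf (seq_pmf E (Suc n)) {es. wf es = y} = pmf_of_set (A y)"
      unfolding seq_pmf_def S_def[symmetric] SB[symmetric]
      by (rule cond_pmf_of_set[OF finS]) (use SB Ane in simp)
    have "C * g y \<le> measure_pmf.expectation (pmf_of_set (A y)) Fn"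
      using cond[of y] Ane c unfolding A_def S_def wf_def g_def by simp
    also have "\<dots> = sum Fn (A y) / real (card (A y))"
      by (rule integral_pmf_of_set[OF Ane finA])
    finally have "C * g y \<le> sum Fn (A y) / real (card (A y))" .
    moreover have "real (card (A y)) > 0" using Ane finA by (simp add: card_gt_0_iff)
    ultimately show "real (card (A y)) * (C * g y) \<le> sum Fn (A y)"
      by (simp add: field_simps)
  qed
  have "(\<Sum>es\<in>S. C * g (wf es)) = (\<Sum>y\<in>wf ` S. \<Sum>es\<in>A y. C * g (wf es))"
    unfolding A_def by (rule sum.group[OF finS finW, symmetric]) simp
  also have "\<dots> = (\<Sum>y\<in>wf ` S. real (card (A y)) * (C * g y))"
    by (rule sum.cong) (auto simp: A_def)
  also have "\<dots> \<le> (\<Sum>y\<in>wf ` S. sum Fn (A y))"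
    by (rule sum_mono) (rule each)
  also have "\<dots> = sum Fn S"
    unfolding A_def by (rule sum.group[OF finS finW]) simp
  finally have le1: "(\<Sum>es\<in>S. C * g (wf es)) \<le> sum Fn S" .
  have "(\<Sum>es\<in>S. C * g (wf es)) = (\<Sum>xs\<in>edge_seqs E n. \<Sum>e\<in>E. C * g (avg_proc v0 xs))"
    unfolding S_def wf_def by (simp add: sum_snoc)
  also have "\<dots> = real (card E) * (C * (\<Sum>xs\<in>edge_seqs E n. g (avg_proc v0 xs)))"
    by (simp add: sum_distrib_left)
  finally have eq: "(\<Sum>es\<in>S. C * g (wf es)) = real (card E) * (C * (\<Sum>xs\<in>edge_seqs E n. g (avg_proc v0 xs)))" .
  have cE: "real (card E) > 0" using ne by (simp add: card_gt_0_iff)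
  have "C * exp_err E v0 n = C * (\<Sum>xs\<in>edge_seqs E n. g (avg_proc v0 xs)) / real (card E) ^ n"
    unfolding exp_err_def integral_seq[OF ne] g_def by simp
  also have "\<dots> = real (card E) * (C * (\<Sum>xs\<in>edge_seqs E n. g (avg_proc v0 xs))) / real (card E) ^ Suc n"
    using cE ne by (simp add: field_simps)
  also have "\<dots> \<le> sum Fn S / real (card E) ^ Suc n"
    by (rule divide_right_mono) (use le1 eq cE in auto)
  also have "\<dots> = measure_pmf.expectation (seq_pmf E (Suc n)) Fn"
    unfolding integral_seq[OF ne] S_def by simp
  finally show ?thesis .
qed


lemma exp_err0:
  fixes E :: "'a::finite set set"
  assumes ne: "E \<noteq> {}" and l: "l1norm v0 \<le> 1"
  shows "exp_err E v0 0 \<le> 2"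
proof -
  have S0: "edge_seqs E 0 = {[]}" unfolding edge_seqs_def by auto
  define c where "c = (\<Sum>x\<in>UNIV. v0 x) / real CARD('a)"
  have vb: "vbar v0 = (\<lambda>_. c)" unfolding vbar_def c_def by simp
  have "exp_err E v0 0 = l1norm (\<lambda>x. v0 x - c)"
    unfolding exp_err_def integral_seq[OF ne] S0 vb by (simp add: avg_proc_def)
  also have "\<dots> \<le> (\<Sum>x\<in>UNIV. \<bar>v0 x\<bar> + \<bar>c\<bar>)"
    unfolding l1norm_def by (rule sum_mono) (rule abs_triangle_ineq4)
  also have "\<dots> = l1norm v0 + real CARD('a) * \<bar>c\<bar>"
    unfolding l1norm_def by (simp add: sum.distrib)
  also have "real CARD('a) * \<bar>c\<bar> = \<bar>\<Sum>x\<in>UNIV. v0 x\<bar>"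
    unfolding c_def by (simp add: abs_divide)
  also have "\<bar>\<Sum>x\<in>UNIV. v0 x\<bar> \<le> l1norm v0"
    unfolding l1norm_def by (rule sum_abs)
  finally show ?thesis using l by linarith
qed

theorem proposition6:
  fixes E :: "'a::finite set set"
    and F :: "nat \<Rightarrow> ('a \<Rightarrow> real) \<Rightarrow> 'a set list \<Rightarrow> real"
    and Flim :: "('a \<Rightarrow> real) \<Rightarrow> 'a set stream \<Rightarrow> real"
    and C :: real
  assumes simple: "simple_graph E"
    and conn: "connected_graph E"
    and nonempty: "E \<noteq> {}"
    and F_nonneg: "\<And>t v0 es. l1norm v0 \<le> 1 \<Longrightarrow> t \<ge> 1 \<Longrightarrow> es \<in> edge_seqs E t \<Longrightarrow> F t v0 es \<ge> 0"
    and C_pos: "C > 0"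
    and cond_exp: "\<And>t v0 w. l1norm v0 \<le> 1 \<Longrightarrow> t \<ge> 1 \<Longrightarrow>
        {es \<in> edge_seqs E t. avg_proc v0 (butlast es) = w} \<noteq> {} \<Longrightarrow>
        measure_pmf.expectation (cond_pmf (seq_pmf E t) {es. avg_proc v0 (butlast es) = w}) (F t v0)
          \<ge> C * l1norm (\<lambda>x. w x - vbar v0 x)"
    and Flim_int: "\<And>v0. l1norm v0 \<le> 1 \<Longrightarrow> integrable (edge_stream_space E) (Flim v0)"
    and partial_int: "\<And>v0 k. l1norm v0 \<le> 1 \<Longrightarrow>
        integrable (edge_stream_space E) (\<lambda>\<omega>. \<Sum>t=1..k. F t v0 (stake t \<omega>))"
    and L1_conv: "\<And>v0. l1norm v0 \<le> 1 \<Longrightarrow>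
        (\<lambda>k. \<integral>\<omega>. \<bar>(\<Sum>t=1..k. F t v0 (stake t \<omega>)) - Flim v0 \<omega>\<bar> \<partial>edge_stream_space E)
          \<longlonglongrightarrow> 0"
  shows "\<forall>\<epsilon>>0.
     (\<forall>v0. l1norm v0 \<le> 1 \<longrightarrow>
        real (t_eps_v0 E \<epsilon> v0) \<le> 8 * (\<integral>\<omega>. Flim v0 \<omega> \<partial>edge_stream_space E) / (\<epsilon>\<^sup>2 * C))
   \<and> (bdd_above ((\<lambda>v0. \<integral>\<omega>. Flim v0 \<omega> \<partial>edge_stream_space E) ` {v0. l1norm v0 \<le> 1}) \<longrightarrow>
        real (t_eps E \<epsilon>) \<le>
          8 * (SUP v0\<in>{v0. l1norm v0 \<le> 1}. \<integral>\<omega>. Flim v0 \<omega> \<partial>edge_stream_space E) / (\<epsilon>\<^sup>2 * C))"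
proof -
  define I where "I = (\<lambda>v0. \<integral>\<omega>. Flim v0 \<omega> \<partial>edge_stream_space E)"
  define J where "J = (\<lambda>v0 k. \<Sum>t=1..k. measure_pmf.expectation (seq_pmf E t) (F t v0))"
  have Jnn: "measure_pmf.expectation (seq_pmf E t) (F t v0) \<ge> 0" if "l1norm v0 \<le> 1" "t \<ge> 1" for v0 t
  proof (rule integral_nonneg_AE)
    show "AE x in measure_pmf (seq_pmf E t). 0 \<le> F t v0 x"
      using that nonempty by (auto simp: AE_measure_pmf_iff seq_pmf_def S_finite S_ne intro: F_nonneg)
  qed
  have JC: "C * (\<Sum>t=1..k. exp_err E v0 (t - 1)) \<le> J v0 k" if "l1norm v0 \<le> 1" for v0 k
  proof -
    have "C * (\<Sum>t=1..k. exp_err E v0 (t - 1)) = (\<Sum>t=1..k. C * exp_err E v0 (t - 1))"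
      by (simp add: sum_distrib_left)
    also have "\<dots> \<le> J v0 k" unfolding J_def
    proof (rule sum_mono)
      fix t assume t: "t \<in> {1..k}"
      then have tS: "t = Suc (t - 1)" by simp
      show "C * exp_err E v0 (t - 1) \<le> measure_pmf.expectation (seq_pmf E t) (F t v0)"
        apply (subst (2 3) tS)
        apply (rule key[OF nonempty])
        apply (subst (asm) tS[symmetric])+
        apply (rule cond_exp[OF that])
        using t by auto
    qed
    finally show ?thesis .
  qed
  have Jmono: "J v0 k \<le> J v0 m" if "l1norm v0 \<le> 1" "k \<le> m" for v0 k m
    unfolding J_def by (rule sum_mono2) (use that Jnn in auto)
  have Jlim: "J v0 \<longlonglongrightarrow> I v0" if l: "l1norm v0 \<le> 1" for v0
  proof -
    have intJ: "(\<integral>\<omega>. (\<Sum>t=1..k. F t v0 (stake t \<omega>)) \<partial>edge_stream_space E) = J v0 k" for k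
    proof -
      have "(\<integral>\<omega>. (\<Sum>t=1..k. F t v0 (stake t \<omega>)) \<partial>edge_stream_space E)
          = (\<Sum>t=1..k. \<integral>\<omega>. F t v0 (stake t \<omega>) \<partial>edge_stream_space E)"
        by (rule Bochner_Integration.integral_sum[where f="\<lambda>t \<omega>. F t v0 (stake t \<omega>)"]) (rule int_stream(1)[OF nonempty])
      then show ?thesis unfolding J_def using int_stream(2)[OF nonempty] by simp
    qed
    have "(\<lambda>k. J v0 k - I v0) \<longlonglongrightarrow> 0"
    proof (rule Lim_null_comparison)
      show "\<forall>\<^sub>F k in sequentially. norm (J v0 k - I v0) \<le>
          (\<integral>\<omega>. \<bar>(\<Sum>t=1..k. F t v0 (stake t \<omega>)) - Flim v0 \<omega>\<bar> \<partial>edge_stream_space E)"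
      proof (rule always_eventually, rule allI)
        fix k
        have "J v0 k - I v0 = (\<integral>\<omega>. (\<Sum>t=1..k. F t v0 (stake t \<omega>)) - Flim v0 \<omega> \<partial>edge_stream_space E)"
          unfolding intJ[symmetric] I_def
          by (rule Bochner_Integration.integral_diff[symmetric]) (rule partial_int[OF l], rule Flim_int[OF l])
        then show "norm (J v0 k - I v0) \<le>
          (\<integral>\<omega>. \<bar>(\<Sum>t=1..k. F t v0 (stake t \<omega>)) - Flim v0 \<omega>\<bar> \<partial>edge_stream_space E)"
          by simp
      qed
      show "(\<lambda>k. \<integral>\<omega>. \<bar>(\<Sum>t=1..k. F t v0 (stake t \<omega>)) - Flim v0 \<omega>\<bar> \<partial>edge_stream_space E) \<longlonglongrightarrow> 0"
        by (rule L1_conv[OF l])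
    qed
    then have "(\<lambda>k. (J v0 k - I v0) + I v0) \<longlonglongrightarrow> 0 + I v0"
      by (intro tendsto_add) auto
    then show ?thesis by simp
  qed
  have R: "C * (\<Sum>t=1..k. exp_err E v0 (t - 1)) \<le> I v0" if l: "l1norm v0 \<le> 1" for v0 k
  proof -
    have "J v0 k \<le> I v0"
      by (rule LIMSEQ_le_const[OF Jlim[OF l]]) (use Jmono[OF l] in blast)
    then show ?thesis using JC[OF l, of k] by linarith
  qed
  have Inn: "I v0 \<ge> 0" if l: "l1norm v0 \<le> 1" for v0
    using R[OF l, of 0] by simp
  show ?thesis
  proof (rule allI, rule impI, rule conjI)
    fix \<epsilon> :: real assume eps: "\<epsilon> > 0"
    have ex: "\<exists>t. exp_err E v0 t \<le> \<epsilon>" if l: "l1norm v0 \<le> 1" for v0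
    proof (rule ccontr)
      assume na: "\<not> (\<exists>t. exp_err E v0 t \<le> \<epsilon>)"
      have gt: "exp_err E v0 t > \<epsilon>" for t
      proof -
        have "\<not> exp_err E v0 t \<le> \<epsilon>" using na by blast
        then show ?thesis by simp
      qed
      define k where "k = nat \<lceil>I v0 / (C * \<epsilon>)\<rceil> + 1"
      have "(\<Sum>t=1..k. \<epsilon>) \<le> (\<Sum>t=1..k. exp_err E v0 (t - 1))"
        by (rule sum_mono) (rule less_imp_le[OF gt])
      then have "C * (real k * \<epsilon>) \<le> C * (\<Sum>t=1..k. exp_err E v0 (t - 1))"
        using C_pos by simp
      also have "\<dots> \<le> I v0" by (rule R[OF l])
      finally have a: "real k * (C * \<epsilon>) \<le> I v0" by (simp add: algebra_simps)
      have "I v0 / (C * \<epsilon>) < real k" unfolding k_def by linarith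
      then have "I v0 < real k * (C * \<epsilon>)" using C_pos eps by (simp add: divide_less_eq)
      then show False using a by linarith
    qed
    have bound: "real (t_eps_v0 E \<epsilon> v0) \<le> 8 * I v0 / (\<epsilon>\<^sup>2 * C)" if l: "l1norm v0 \<le> 1" for v0
    proof -
      define T where "T = t_eps_v0 E \<epsilon> v0"
      have below: "exp_err E v0 t > \<epsilon>" if "t < T" for t
      proof -
        have "\<not> exp_err E v0 t \<le> \<epsilon>"
          by (rule not_less_Least) (use that in \<open>simp add: T_def t_eps_v0_def\<close>)
        then show ?thesis by simp
      qed
      have pos: "\<epsilon>\<^sup>2 * C > 0" using eps C_pos by simp
      show ?thesis
      proof (cases "T = 0")
        case True
        then show ?thesis using Inn[OF l] pos unfolding T_def[symmetric] by simp
      next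
        case False
        have "\<epsilon> < exp_err E v0 0" using below False by simp
        then have e2: "\<epsilon> < 2" using exp_err0[OF nonempty l] by linarith
        have "(\<Sum>t=1..T. \<epsilon>) \<le> (\<Sum>t=1..T. exp_err E v0 (t - 1))"
        proof (rule sum_mono)
          fix t assume "t \<in> {1..T}"
          then have "t - 1 < T" by auto
          then show "\<epsilon> \<le> exp_err E v0 (t - 1)" using below by (simp add: less_imp_le)
        qed
        then have "C * (real T * \<epsilon>) \<le> C * (\<Sum>t=1..T. exp_err E v0 (t - 1))"
          using C_pos by simp
        also have "\<dots> \<le> I v0" by (rule R[OF l])
        finally have a: "real T * \<epsilon> * C \<le> I v0" by (simp add: algebra_simps)
        then have "real T * \<epsilon> * C * \<epsilon> \<le> I v0 * \<epsilon>" using eps by (simp add: mult_right_mono)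
        also have "\<dots> \<le> 8 * I v0"
        proof -
          have "I v0 * \<epsilon> \<le> I v0 * 8" using e2 Inn[OF l] by (intro mult_left_mono) auto
          then show ?thesis by simp
        qed
        finally have "real T * (\<epsilon>\<^sup>2 * C) \<le> 8 * I v0" by (simp add: power2_eq_square algebra_simps)
        then show ?thesis unfolding T_def[symmetric] using pos by (simp add: pos_le_divide_eq)
      qed
    qed
    show "\<forall>v0. l1norm v0 \<le> 1 \<longrightarrow>
        real (t_eps_v0 E \<epsilon> v0) \<le> 8 * (\<integral>\<omega>. Flim v0 \<omega> \<partial>edge_stream_space E) / (\<epsilon>\<^sup>2 * C)"
      using bound unfolding I_def by blast
    show "bdd_above ((\<lambda>v0. \<integral>\<omega>. Flim v0 \<omega> \<partial>edge_stream_space E) ` {v0. l1norm v0 \<le> 1}) \<longrightarrow>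
        real (t_eps E \<epsilon>) \<le>
          8 * (SUP v0\<in>{v0. l1norm v0 \<le> 1}. \<integral>\<omega>. Flim v0 \<omega> \<partial>edge_stream_space E) / (\<epsilon>\<^sup>2 * C)"
    proof
    assume bdd: "bdd_above ((\<lambda>v0. \<integral>\<omega>. Flim v0 \<omega> \<partial>edge_stream_space E) ` {v0. l1norm v0 \<le> 1})"
    define M where "M = (SUP v0\<in>{v0. l1norm v0 \<le> 1}. \<integral>\<omega>. Flim v0 \<omega> \<partial>edge_stream_space E)"
    have IM: "I v0 \<le> M" if "l1norm v0 \<le> 1" for v0
      unfolding M_def I_def by (rule cSUP_upper[OF _ bdd]) (use that in simp)
    have pos: "\<epsilon>\<^sup>2 * C > 0" using eps C_pos by simp
    define B where "B = 8 * M / (\<epsilon>\<^sup>2 * C)"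
    have z: "l1norm (\<lambda>_::'a. 0::real) \<le> 1" unfolding l1norm_def by simp
    have B0: "B \<ge> 0" unfolding B_def using IM[OF z] Inn[OF z] pos by simp
    define N where "N = nat \<lfloor>B\<rfloor>"
    have NB: "real N \<le> B" unfolding N_def using B0 by linarith
    have dec: "exp_err E v0 m \<le> exp_err E v0 n" if "n \<le> m" for v0 n m
      using that
    proof (induction m)
      case 0 then show ?case by simp
    next
      case (Suc m)
      show ?case
      proof (cases "n = Suc m")
        case True then show ?thesis by simp
      next
        case False
        then have "n \<le> m" using Suc.prems by simp
        then show ?thesis using Suc.IH exp_err_mono[OF nonempty simple, of v0 m] by linarith
      qed
    qed
    have allN: "\<forall>v0. l1norm v0 = 1 \<longrightarrow> exp_err E v0 N \<le> \<epsilon>"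
    proof (intro allI impI)
      fix v0 :: "'a \<Rightarrow> real" assume "l1norm v0 = 1"
      then have l: "l1norm v0 \<le> 1" by simp
      have "real (t_eps_v0 E \<epsilon> v0) \<le> 8 * I v0 / (\<epsilon>\<^sup>2 * C)" by (rule bound[OF l])
      also have "\<dots> \<le> B" unfolding B_def using IM[OF l] pos by (simp add: divide_right_mono)
      finally have "t_eps_v0 E \<epsilon> v0 \<le> N" unfolding N_def by linarith
      moreover have "exp_err E v0 (t_eps_v0 E \<epsilon> v0) \<le> \<epsilon>"
        unfolding t_eps_v0_def by (rule LeastI_ex) (rule ex[OF l])
      ultimately show "exp_err E v0 N \<le> \<epsilon>" using dec[of "t_eps_v0 E \<epsilon> v0" N v0] by linarith
    qed
    have "t_eps E \<epsilon> \<le> N" unfolding t_eps_def by (rule Least_le) (rule allN)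
    then have "real (t_eps E \<epsilon>) \<le> B" using NB by linarith
    then show "real (t_eps E \<epsilon>) \<le>
          8 * (SUP v0\<in>{v0. l1norm v0 \<le> 1}. \<integral>\<omega>. Flim v0 \<omega> \<partial>edge_stream_space E) / (\<epsilon>\<^sup>2 * C)"
      unfolding B_def M_def .
    qed
  qed
qed

end
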